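(* For $\epsilon>0$ and $\Delta\in\mathbb{R}$ let $\mathrm{LB}(\alpha,\epsilon,\Delta):=\alpha\Delta+\alpha\int_{\alpha}^{1}\frac{1-t}{t(1-t)+\epsilon}\,dt+(1-\alpha)\int_{0}^{\alpha}\frac{t}{t(1-t)+\epsilon}\,dt$ for $\alpha\in[0,1]$, and $$\alpha^{*}_{\mathrm{approx}}(\epsilon,\Delta):=\frac{1-\sqrt{1+4\epsilon}}{2}+\frac{\sqrt{1+4\epsilon}}{1+e^{-\sqrt{1+4\epsilon}\,\Delta}}.$$ Then the maximizer of $\mathrm{LB}(\cdot,\epsilon,\Delta)$ over $\alpha\in[0,1]$ equals $\alpha^{*}_{\mathrm{approx}}(\epsilon,\Delta)$ if and only if $|\Delta|\le \frac{1}{\sqrt{1+4\epsilon}}\log\frac{(\sqrt{1+4\epsilon}+1)^2}{4\epsilon}$. Moreover, $\frac{1}{\sqrt{1+4\epsilon}}\log\frac{(\sqrt{1+4\epsilon}+1)^2}{4\epsilon}=-\log\epsilon+O(\epsilon\log\epsilon)$ as $\epsilon\to0^{+}$. *)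

theory Defs
  imports "HOL-Analysis.Analysis" "HOL-Library.Landau_Symbols"
begin

definition LB :: "real \<Rightarrow> real \<Rightarrow> real \<Rightarrow> real" where
  "LB \<alpha> \<epsilon> \<Delta> =
     \<alpha> * \<Delta>
     + \<alpha> * integral {\<alpha>..1} (\<lambda>t. (1 - t) / (t * (1 - t) + \<epsilon>))
     + (1 - \<alpha>) * integral {0..\<alpha>} (\<lambda>t. t / (t * (1 - t) + \<epsilon>))"

definition alpha_approx :: "real \<Rightarrow> real \<Rightarrow> real" where
  "alpha_approx \<epsilon> \<Delta> =
     (1 - sqrt (1 + 4 * \<epsilon>)) / 2
     + sqrt (1 + 4 * \<epsilon>) / (1 + exp (- sqrt (1 + 4 * \<epsilon>) * \<Delta>))"

definition threshold :: "real \<Rightarrow> real" where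
  "threshold \<epsilon> =
     (1 / sqrt (1 + 4 * \<epsilon>)) * ln ((sqrt (1 + 4 * \<epsilon>) + 1)^2 / (4 * \<epsilon>))"

end

theory Submission imports Defs "HOL-Real_Asymp.Real_Asymp" begin

definition Lf :: "real \<Rightarrow> real \<Rightarrow> real" where
  "Lf e t = (ln (sqrt (1 + 4 * e) - 1 + 2 * t) - ln (sqrt (1 + 4 * e) + 1 - 2 * t)) / sqrt (1 + 4 * e)"
definition qf :: "real \<Rightarrow> real \<Rightarrow> real" where "qf e t = t * (1 - t) + e"
definition F1 :: "real \<Rightarrow> real \<Rightarrow> real" where "F1 e t = Lf e t / 2 + ln (qf e t) / 2"
definition F2 :: "real \<Rightarrow> real \<Rightarrow> real" where "F2 e t = Lf e t / 2 - ln (qf e t) / 2"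

lemma r_gt1: "e > 0 \<Longrightarrow> sqrt (1 + 4 * e) > 1" by simp
lemma r_sq: "e > 0 \<Longrightarrow> (sqrt (1 + 4 * e))^2 = 1 + 4 * e" by simp

lemma prod_q: assumes "e > 0" shows "(sqrt (1 + 4 * e) - 1 + 2 * t) * (sqrt (1 + 4 * e) + 1 - 2 * t) = 4 * qf e t"
proof -
  have "(sqrt (1 + 4 * e) - 1 + 2 * t) * (sqrt (1 + 4 * e) + 1 - 2 * t) = (sqrt (1 + 4 * e))^2 - (1 - 2*t)^2"
    by (simp add: algebra_simps power2_eq_square)
  also have "\<dots> = 4 * qf e t" using r_sq[OF assms] by (simp add: qf_def algebra_simps power2_eq_square)
  finally show ?thesis .
qed

lemma Lf_deriv: assumes "e > 0" "sqrt (1 + 4 * e) - 1 + 2 * t > 0" "sqrt (1 + 4 * e) + 1 - 2 * t > 0"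
  shows "(Lf e has_real_derivative 1 / qf e t) (at t)"
proof -
  define r where "r = sqrt (1 + 4 * e)"
  have r: "r > 0" using r_gt1[OF assms(1)] r_def by linarith
  have a: "r - 1 + 2 * t > 0" "r + 1 - 2 * t > 0" using assms r_def by auto
  have "((\<lambda>t. (ln (r - 1 + 2 * t) - ln (r + 1 - 2 * t)) / r) has_real_derivative
      ((2 / (r - 1 + 2 * t) - (-2) / (r + 1 - 2 * t)) / r)) (at t)"
    using a by (auto intro!: derivative_eq_intros)
  moreover have "((2 / (r - 1 + 2 * t) - (-2) / (r + 1 - 2 * t)) / r) = 1 / qf e t"
  proof -
    define A where "A = r - 1 + 2 * t"
    define B where "B = r + 1 - 2 * t"
    have AB: "A > 0" "B > 0" "A + B = 2 * r" using a unfolding A_def B_def by auto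
    have "2 / A + 2 / B = 2 * (A + B) / (A * B)" using AB by (simp add: field_simps)
    also have "\<dots> = 4 * r / (A * B)" using AB by simp
    finally have "(2 / A + 2 / B) / r = 4 / (A * B)" using r by simp
    then have "((2 / (r - 1 + 2 * t) - (-2) / (r + 1 - 2 * t)) / r) = 4 / ((r - 1 + 2 * t) * (r + 1 - 2 * t))"
      unfolding A_def B_def by simp
    then show ?thesis using prod_q[OF assms(1), of t] unfolding r_def by simp
  qed
  ultimately show ?thesis unfolding Lf_def[abs_def] r_def by simp
qed

lemma lnq_deriv: assumes "qf e t > 0"
  shows "((\<lambda>t. ln (qf e t)) has_real_derivative (1 - 2 * t) / qf e t) (at t)"
proof -
  have q: "t * (1 - t) + e > 0" using assms unfolding qf_def .
  have "((\<lambda>t. ln (t * (1 - t) + e)) has_real_derivative ((1 - t) - t) / (t * (1 - t) + e)) (at t)"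
    using q by (auto intro!: derivative_eq_intros simp: field_simps)
  then show ?thesis unfolding qf_def by (simp add: algebra_simps)
qed

lemma dom_pos: assumes "e > 0" "0 \<le> t" "t \<le> 1"
  shows "sqrt (1 + 4 * e) - 1 + 2 * t > 0" "sqrt (1 + 4 * e) + 1 - 2 * t > 0"
  using r_gt1[OF assms(1)] assms by linarith+

lemma q_pos: assumes "e > 0" "sqrt (1 + 4 * e) - 1 + 2 * t > 0" "sqrt (1 + 4 * e) + 1 - 2 * t > 0"
  shows "qf e t > 0"
proof -
  have "4 * qf e t > 0" using prod_q[OF assms(1), of t] assms(2,3) by (metis mult_pos_pos)
  then show ?thesis by simp
qed

lemma F1_deriv: assumes "e > 0" "sqrt (1 + 4 * e) - 1 + 2 * t > 0" "sqrt (1 + 4 * e) + 1 - 2 * t > 0"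
  shows "(F1 e has_real_derivative (1 - t) / qf e t) (at t)"
proof -
  have q: "qf e t > 0" using q_pos[OF assms] .
  have "(F1 e has_real_derivative (1 / qf e t) / 2 + ((1 - 2 * t) / qf e t) / 2) (at t)"
    unfolding F1_def[abs_def]
    by (rule DERIV_add[OF DERIV_cdivide[OF Lf_deriv[OF assms]] DERIV_cdivide[OF lnq_deriv[OF q]]])
  moreover have "(1 / qf e t) / 2 + ((1 - 2 * t) / qf e t) / 2 = (1 - t) / qf e t"
    using q by (simp add: field_simps)
  ultimately show ?thesis by simp
qed

lemma F2_deriv: assumes "e > 0" "sqrt (1 + 4 * e) - 1 + 2 * t > 0" "sqrt (1 + 4 * e) + 1 - 2 * t > 0"
  shows "(F2 e has_real_derivative t / qf e t) (at t)"
proof -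
  have q: "qf e t > 0" using q_pos[OF assms] .
  have "(F2 e has_real_derivative (1 / qf e t) / 2 - ((1 - 2 * t) / qf e t) / 2) (at t)"
    unfolding F2_def[abs_def]
    by (rule DERIV_diff[OF DERIV_cdivide[OF Lf_deriv[OF assms]] DERIV_cdivide[OF lnq_deriv[OF q]]])
  moreover have "(1 / qf e t) / 2 - ((1 - 2 * t) / qf e t) / 2 = t / qf e t"
    using q by (simp add: field_simps)
  ultimately show ?thesis by simp
qed


definition LBc :: "real \<Rightarrow> real \<Rightarrow> real \<Rightarrow> real" where
  "LBc e D a = a * D + a * (F1 e 1 - F1 e a) + (1 - a) * (F2 e a - F2 e 0)"

lemma LB_eq: assumes "e > 0" "0 \<le> a" "a \<le> 1" shows "LB a e D = LBc e D a"
proof -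
  have d1: "((\<lambda>t. (1 - t) / (t * (1 - t) + e)) has_integral F1 e 1 - F1 e a) {a..1}"
  proof (rule fundamental_theorem_of_calculus)
    fix x assume x: "x \<in> {a..1}"
    have "(F1 e has_real_derivative (1 - x) / qf e x) (at x)"
      using x assms by (intro F1_deriv dom_pos) auto
    then show "(F1 e has_vector_derivative (1 - x) / (x * (1 - x) + e)) (at x within {a..1})"
      unfolding qf_def has_real_derivative_iff_has_vector_derivative
      by (rule has_vector_derivative_at_within)
  qed (use assms in auto)
  have d2: "((\<lambda>t. t / (t * (1 - t) + e)) has_integral F2 e a - F2 e 0) {0..a}"
  proof (rule fundamental_theorem_of_calculus)
    fix x assume x: "x \<in> {0..a}"
    have "(F2 e has_real_derivative x / qf e x) (at x)"
      using x assms by (intro F2_deriv dom_pos) auto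
    then show "(F2 e has_vector_derivative x / (x * (1 - x) + e)) (at x within {0..a})"
      unfolding qf_def has_real_derivative_iff_has_vector_derivative
      by (rule has_vector_derivative_at_within)
  qed (use assms in auto)
  show ?thesis unfolding LB_def LBc_def using integral_unique[OF d1] integral_unique[OF d2] by simp
qed

lemma F_sum: "F1 e 1 + F2 e 0 = 0"
proof -
  define r where "r = sqrt (1 + 4 * e)"
  have eqs: "r-1+2*1 = r+1" "r+1-2*1 = r-1" "r-1+2*0 = r-1" "r+1-2*0=r+1" by simp_all
  have "Lf e 0 + Lf e 1 = (ln (r - 1 + 2 * 0) - ln (r + 1 - 2 * 0)) / r + (ln (r - 1 + 2 * 1) - ln (r + 1 - 2 * 1)) / r"
    unfolding Lf_def r_def ..
  also have "\<dots> = ((ln (r - 1) - ln (r + 1)) + (ln (r + 1) - ln (r - 1))) / r"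
    unfolding eqs by (simp only: add_divide_distrib)
  also have "\<dots> = 0" by simp
  finally show ?thesis unfolding F1_def F2_def qf_def by (simp add: field_simps)
qed

lemma LBc_deriv: assumes "e > 0" "sqrt (1 + 4 * e) - 1 + 2 * a > 0" "sqrt (1 + 4 * e) + 1 - 2 * a > 0"
  shows "(LBc e D has_real_derivative D - Lf e a) (at a)"
proof -
  have q: "qf e a > 0" using q_pos[OF assms] .
  note f1 = F1_deriv[OF assms] and f2 = F2_deriv[OF assms]
  have "(LBc e D has_real_derivative
      (1 * D + (1 * (F1 e 1 - F1 e a) + a * (0 - (1 - a) / qf e a))
        + ((0 - 1) * (F2 e a - F2 e 0) + (1 - a) * (a / qf e a - 0)))) (at a)"
    unfolding LBc_def[abs_def]
    apply (rule derivative_eq_intros f1 f2 refl)+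
    apply (simp add: algebra_simps)
    done
  moreover have "(1 * D + (1 * (F1 e 1 - F1 e a) + a * (0 - (1 - a) / qf e a))
        + ((0 - 1) * (F2 e a - F2 e 0) + (1 - a) * (a / qf e a - 0))) = D - Lf e a"
  proof -
    have "F1 e a + F2 e a = Lf e a" unfolding F1_def F2_def by simp
    moreover have "a * (0 - (1 - a) / qf e a) = - ((1 - a) * (a / qf e a - 0))" by (simp add: algebra_simps)
    moreover have "1 * D + (1 * (F1 e 1 - F1 e a) + a * (0 - (1 - a) / qf e a)) +
     ((0 - 1) * (F2 e a - F2 e 0) + (1 - a) * (a / qf e a - 0)) = D + (F1 e 1 + F2 e 0) - (F1 e a + F2 e a) + (a * (0 - (1 - a) / qf e a) + (1 - a) * (a / qf e a - 0))"
      by (simp add: algebra_simps)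
    ultimately show ?thesis using F_sum[of e] by simp
  qed
  ultimately show ?thesis by (simp only:)
qed

lemma Lf_mono: assumes "e > 0" "sqrt (1 + 4 * e) - 1 + 2 * x > 0" "sqrt (1 + 4 * e) + 1 - 2 * y > 0" "x < y"
  shows "Lf e x < Lf e y"
proof -
  have r: "sqrt (1 + 4 * e) > 0" using r_gt1[OF assms(1)] by linarith
  have "ln (sqrt (1 + 4 * e) - 1 + 2 * x) < ln (sqrt (1 + 4 * e) - 1 + 2 * y)"
    using assms by simp
  moreover have "ln (sqrt (1 + 4 * e) + 1 - 2 * y) < ln (sqrt (1 + 4 * e) + 1 - 2 * x)"
    using assms by simp
  ultimately show ?thesis unfolding Lf_def using r by (simp add: divide_strict_right_mono)
qed

lemma approx_dom: assumes "e > 0"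
  shows "sqrt (1 + 4 * e) - 1 + 2 * alpha_approx e D > 0"
        "sqrt (1 + 4 * e) + 1 - 2 * alpha_approx e D > 0"
        "Lf e (alpha_approx e D) = D"
proof -
  define r where "r = sqrt (1 + 4 * e)"
  define E where "E = exp (- r * D)"
  have r: "r > 1" using r_gt1[OF assms] r_def by simp
  have E: "E > 0" unfolding E_def by simp
  have a: "alpha_approx e D = (1 - r) / 2 + r / (1 + E)" unfolding alpha_approx_def r_def E_def by simp
  have A: "r - 1 + 2 * alpha_approx e D = 2 * r / (1 + E)" unfolding a using E by (simp add: field_simps)
  have B: "r + 1 - 2 * alpha_approx e D = (2 * r / (1 + E)) * E" unfolding a using E by (simp add: field_simps)
  have pos: "2 * r / (1 + E) > 0" using r E by simp
  show "sqrt (1 + 4 * e) - 1 + 2 * alpha_approx e D > 0" using A pos r_def by simp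
  have "2 * r / (1 + E) * E > 0" using pos E by (rule mult_pos_pos)
  then show "sqrt (1 + 4 * e) + 1 - 2 * alpha_approx e D > 0" using B r_def by simp
  have "Lf e (alpha_approx e D) = (ln (2 * r / (1 + E)) - ln ((2 * r / (1 + E)) * E)) / r"
    unfolding Lf_def r_def[symmetric] A B ..
  also have "\<dots> = - ln E / r"
  proof -
    have "ln ((2 * r / (1 + E)) * E) = ln (2 * r / (1 + E)) + ln E" using pos E by (subst ln_mult) auto
    then show ?thesis by simp
  qed
  also have "\<dots> = D" unfolding E_def using r by simp
  finally show "Lf e (alpha_approx e D) = D" .
qed

lemma Lf_1: assumes "e > 0" shows "Lf e 1 = threshold e" "Lf e 0 = - threshold e"
proof -
  define r where "r = sqrt (1 + 4 * e)"
  have r: "r > 1" using r_gt1[OF assms] r_def by simp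
  have r2: "r^2 = 1 + 4 * e" using r_sq[OF assms] r_def by simp
  have "4 * e = (r - 1) * (r + 1)" using r2 by (simp add: algebra_simps power2_eq_square)
  then have "(r + 1)^2 / (4 * e) = (r + 1) / (r - 1)" using r by (simp add: power2_eq_square)
  then have t: "threshold e = ln ((r + 1) / (r - 1)) / r" unfolding threshold_def r_def[symmetric] by simp
  have eqs: "r-1+2*1 = r+1" "r+1-2*1 = r-1" "r-1+2*0 = r-1" "r+1-2*0=r+1" by simp_all
  have ld: "ln ((r + 1) / (r - 1)) = ln (r + 1) - ln (r - 1)" using r by (subst ln_div) auto
  have "Lf e 1 = (ln (r + 1) - ln (r - 1)) / r" unfolding Lf_def r_def[symmetric] eqs ..
  also have "(ln (r + 1) - ln (r - 1)) / r = threshold e" unfolding t ld ..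
  finally show "Lf e 1 = threshold e" .
  have "Lf e 0 = - ((ln (r + 1) - ln (r - 1)) / r)" unfolding Lf_def r_def[symmetric] eqs by (simp only: minus_divide_left minus_diff_eq)
  also have "\<dots> = - threshold e" unfolding t ld ..
  finally show "Lf e 0 = - threshold e" .
qed


lemma main_part:
  fixes \<epsilon> \<Delta> :: real
  assumes ep: "\<epsilon> > 0"
  shows "arg_max (\<lambda>\<alpha>. LB \<alpha> \<epsilon> \<Delta>) (\<lambda>\<alpha>. 0 \<le> \<alpha> \<and> \<alpha> \<le> 1) = alpha_approx \<epsilon> \<Delta>
            \<longleftrightarrow> \<bar>\<Delta>\<bar> \<le> threshold \<epsilon>"
proof -
  define P where "P = (\<lambda>\<alpha>::real. 0 \<le> \<alpha> \<and> \<alpha> \<le> 1)"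
  define f where "f = LBc \<epsilon> \<Delta>"
  define a where "a = alpha_approx \<epsilon> \<Delta>"
  have argeq: "arg_max (\<lambda>\<alpha>. LB \<alpha> \<epsilon> \<Delta>) P = arg_max f P"
  proof -
    have h: "\<And>x. is_arg_max (\<lambda>\<alpha>. LB \<alpha> \<epsilon> \<Delta>) P x = is_arg_max f P x"
      unfolding is_arg_max_def P_def f_def using LB_eq[OF ep] by auto
    have "is_arg_max (\<lambda>\<alpha>. LB \<alpha> \<epsilon> \<Delta>) P = is_arg_max f P" by (rule ext) (rule h)
    then show ?thesis unfolding arg_max_def by simp
  qed
  have der: "(f has_real_derivative \<Delta> - Lf \<epsilon> x) (at x)" if "0 \<le> x" "x \<le> 1" for x
    unfolding f_def using that by (intro LBc_deriv ep dom_pos) auto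
  have cont: "continuous_on {0..1} f"
    by (rule continuous_at_imp_continuous_on) (use der DERIV_isCont in fastforce)
  obtain x0 where x0: "x0 \<in> {0..1}" "\<forall>y\<in>{0..1}. f y \<le> f x0"
    using continuous_attains_sup[OF compact_Icc _ cont] by auto
  have "is_arg_max f P x0" unfolding is_arg_max_def P_def using x0 by (auto simp: not_less)
  then have "is_arg_max f P (arg_max f P)" unfolding arg_max_def by (rule someI)
  then have Pam: "P (arg_max f P)" unfolding is_arg_max_def by simp
  note ad = approx_dom[OF ep, of \<Delta>, folded a_def]
  note L1 = Lf_1[OF ep]
  have d1: "sqrt (1 + 4 * \<epsilon>) - 1 + 2 * 1 > 0" "sqrt (1 + 4 * \<epsilon>) + 1 - 2 * 1 > 0"
    using dom_pos[OF ep, of 1] by auto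
  have d0: "sqrt (1 + 4 * \<epsilon>) - 1 + 2 * 0 > 0" "sqrt (1 + 4 * \<epsilon>) + 1 - 2 * 0 > 0"
    using dom_pos[OF ep, of 0] by auto
  have up: "a \<le> 1 \<longleftrightarrow> \<Delta> \<le> threshold \<epsilon>"
  proof
    assume "a \<le> 1"
    then consider "a < 1" | "a = 1" by linarith
    then show "\<Delta> \<le> threshold \<epsilon>"
    proof cases
      case 1 then show ?thesis using Lf_mono[OF ep ad(1) d1(2) 1] ad(3) L1 by simp
    next
      case 2 then show ?thesis using ad(3) L1 by simp
    qed
  next
    assume h: "\<Delta> \<le> threshold \<epsilon>"
    show "a \<le> 1"
    proof (rule ccontr)
      assume "\<not> a \<le> 1"
      then have "1 < a" by simp
      from Lf_mono[OF ep d1(1) ad(2) this] ad(3) L1 h show False by simp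
    qed
  qed
  have lo: "0 \<le> a \<longleftrightarrow> - threshold \<epsilon> \<le> \<Delta>"
  proof
    assume "0 \<le> a"
    then consider "0 < a" | "a = 0" by linarith
    then show "- threshold \<epsilon> \<le> \<Delta>"
    proof cases
      case 1 then show ?thesis using Lf_mono[OF ep d0(1) ad(2) 1] ad(3) L1 by simp
    next
      case 2 then show ?thesis using ad(3) L1 by simp
    qed
  next
    assume h: "- threshold \<epsilon> \<le> \<Delta>"
    show "0 \<le> a"
    proof (rule ccontr)
      assume "\<not> 0 \<le> a"
      then have "a < 0" by simp
      from Lf_mono[OF ep ad(1) d0(2) this] ad(3) L1 h show False by simp
    qed
  qed
  have iff: "P a \<longleftrightarrow> \<bar>\<Delta>\<bar> \<le> threshold \<epsilon>" unfolding P_def using up lo by auto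
  have strict: "f y < f a" if Pa: "P a" and Py: "P y" and ne: "y \<noteq> a" for y
  proof (cases "y < a")
    case True
    have "\<exists>z>y. z < a \<and> f a - f y = (a - y) * (\<Delta> - Lf \<epsilon> z)"
      by (rule MVT2[OF True]) (use der Pa Py P_def in auto)
    then obtain z where z: "y < z" "z < a" "f a - f y = (a - y) * (\<Delta> - Lf \<epsilon> z)" by auto
    have dz: "sqrt (1 + 4 * \<epsilon>) - 1 + 2 * z > 0" using dom_pos[OF ep, of y] Py z P_def by auto
    have "Lf \<epsilon> z < \<Delta>" using Lf_mono[OF ep dz ad(2) z(2)] ad(3) by simp
    then have "(a - y) * (\<Delta> - Lf \<epsilon> z) > 0" using True by simp
    then show ?thesis using z by simp
  next
    case False
    then have lt: "a < y" using ne by simp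
    have "\<exists>z>a. z < y \<and> f y - f a = (y - a) * (\<Delta> - Lf \<epsilon> z)"
      by (rule MVT2[OF lt]) (use der Pa Py P_def in auto)
    then obtain z where z: "a < z" "z < y" "f y - f a = (y - a) * (\<Delta> - Lf \<epsilon> z)" by auto
    have dz: "sqrt (1 + 4 * \<epsilon>) + 1 - 2 * z > 0" using dom_pos[OF ep, of y] Py z P_def by auto
    have "\<Delta> < Lf \<epsilon> z" using Lf_mono[OF ep ad(1) dz z(1)] ad(3) by simp
    then have "(y - a) * (\<Delta> - Lf \<epsilon> z) < 0" using lt by (simp add: mult_pos_neg)
    then show ?thesis using z by simp
  qed
  have "arg_max f P = a \<longleftrightarrow> P a"
  proof
    assume "arg_max f P = a" then show "P a" using Pam by simp
  next
    assume Pa: "P a"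
    show "arg_max f P = a" unfolding arg_max_def
    proof (rule some_equality)
      show "is_arg_max f P a" unfolding is_arg_max_def using Pa strict
        by (metis less_asym order_less_irrefl)
    next
      fix x assume "is_arg_max f P x"
      then show "x = a" unfolding is_arg_max_def using Pa strict by blast
    qed
  qed
  then show ?thesis using argeq iff unfolding P_def a_def by simp
qed


theorem lemma5:
  fixes \<epsilon> \<Delta> :: real
  assumes "\<epsilon> > 0"
  shows "(arg_max (\<lambda>\<alpha>. LB \<alpha> \<epsilon> \<Delta>) (\<lambda>\<alpha>. 0 \<le> \<alpha> \<and> \<alpha> \<le> 1) = alpha_approx \<epsilon> \<Delta>
            \<longleftrightarrow> \<bar>\<Delta>\<bar> \<le> threshold \<epsilon>)
         \<and> (\<lambda>e. threshold e - (- ln e)) \<in> O[at_right 0](\<lambda>e. e * ln e)"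
proof
  show "arg_max (\<lambda>\<alpha>. LB \<alpha> \<epsilon> \<Delta>) (\<lambda>\<alpha>. 0 \<le> \<alpha> \<and> \<alpha> \<le> 1) = alpha_approx \<epsilon> \<Delta>
            \<longleftrightarrow> \<bar>\<Delta>\<bar> \<le> threshold \<epsilon>" by (rule main_part[OF assms])
  show "(\<lambda>e. threshold e - (- ln e)) \<in> O[at_right 0](\<lambda>e. e * ln e)"
    unfolding threshold_def by real_asymp
qed

end
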